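(* Let $X$ be a locally compact Hausdorff space and consider a commutative square of pointed extensions of $X$ with $X_+\to X''_\ast$, $X_+\to X'_\ast$, $X''_\ast\to X^+$, $X'_\ast\to X^+$. If this square is simultaneously a pullback and a pushout in the category of compactly generated Hausdorff spaces, then the canonical relations $X'_\ast\to(X''_\ast)^\neg$ and $X''_\ast\to(X'_\ast)^\neg$ are the universal relations to the well-pointed replacements; i.e. $(X''_\ast)^\neg=(X'_\ast)^{\neg\neg}$ and $(X'_\ast)^\neg=(X''_\ast)^{\neg\neg}$ via these relations.
   Context: A pointed extension of $X$ is a compactly generated Hausdorff topology on $\ast\amalg X$ extending that of $X$; they form a poset with $X_\ast\le X'_\ast$ (a "relation" $X_\ast\to X'_\ast$) iff the identity map is continuous; $X_+$ (disjoint basepoint) is initial and $X^+$ (one-point compactification) is final. The negation $X_\ast^\neg$ is the final pointed extension $X'_\ast$ for which $X_+\to X_\ast\times_{X^+}X'_\ast$ is a homeomorphism. There is a canonical relation $X_\ast\to X_\ast^{\neg\neg}$; $X_\ast$ is well-pointed if it is an equality, and $X_\ast\to X_\ast^{\neg\neg}$ is the well-pointed replacement (left adjoint to the inclusion of well-pointed extensions). *)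

theory Defs
  imports "HOL-Analysis.Analysis"
begin

text \<open>Pointed extensions of a space X: topologies on the carrier
  None (the basepoint) plus Some ` topspace X, compactly generated Hausdorff,
  restricting to the topology of X along Some.\<close>

definition pt_carrier :: "'a topology \<Rightarrow> 'a option set" where
  "pt_carrier X = insert None (Some ` topspace X)"

definition CGH_space :: "'b topology \<Rightarrow> bool" where
  "CGH_space Z \<longleftrightarrow> Hausdorff_space Z \<and> k_space Z"

definition pointed_ext :: "'a topology \<Rightarrow> 'a option topology \<Rightarrow> bool" where
  "pointed_ext X T \<longleftrightarrow> topspace T = pt_carrier X \<and> CGH_space T \<and> embedding_map X T Some"

text \<open>A relation T1 \<rightarrow> T2: the identity map is continuous.\<close>
definition ext_rel :: "'a option topology \<Rightarrow> 'a option topology \<Rightarrow> bool" where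
  "ext_rel T1 T2 \<longleftrightarrow> continuous_map T1 T2 id"

definition plus_ext :: "'a topology \<Rightarrow> 'a option topology" where
  "plus_ext X = topology (\<lambda>U. U \<subseteq> pt_carrier X \<and> openin X (Some -` U))"

definition opc_ext :: "'a topology \<Rightarrow> 'a option topology" where
  "opc_ext X = topology (\<lambda>U. U \<subseteq> pt_carrier X \<and> openin X (Some -` U) \<and>
      (None \<in> U \<longrightarrow> compactin X (topspace X - Some -` U) \<and> closedin X (topspace X - Some -` U)))"

definition cgh_pullback :: "'b topology \<Rightarrow> 'c topology \<Rightarrow> ('b \<Rightarrow> 'd) \<Rightarrow> ('c \<Rightarrow> 'd) \<Rightarrow> ('b \<times> 'c) topology" where
  "cgh_pullback A B f g =
     kification (subtopology (prod_topology A B) {(a, b) \<in> topspace A \<times> topspace B. f a = g b})"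

definition ext_fibprod :: "'a option topology \<Rightarrow> 'a option topology \<Rightarrow> ('a option \<times> 'a option) topology" where
  "ext_fibprod T1 T2 = cgh_pullback T1 T2 id id"

definition neg_ext :: "'a topology \<Rightarrow> 'a option topology \<Rightarrow> 'a option topology" where
  "neg_ext X T = (THE T'. pointed_ext X T'
       \<and> homeomorphic_map (plus_ext X) (ext_fibprod T T') (\<lambda>p. (p, p))
       \<and> (\<forall>S. pointed_ext X S \<and> homeomorphic_map (plus_ext X) (ext_fibprod T S) (\<lambda>p. (p, p))
              \<longrightarrow> ext_rel S T'))"

definition cgh_pullback_square ::
  "'a topology \<Rightarrow> 'b topology \<Rightarrow> 'c topology \<Rightarrow> 'p topology
   \<Rightarrow> ('a \<Rightarrow> 'b) \<Rightarrow> ('a \<Rightarrow> 'c) \<Rightarrow> ('b \<Rightarrow> 'p) \<Rightarrow> ('c \<Rightarrow> 'p) \<Rightarrow> bool" where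
  "cgh_pullback_square A B1 B2 P i1 i2 j1 j2 \<longleftrightarrow>
     continuous_map A B1 i1 \<and> continuous_map A B2 i2 \<and>
     continuous_map B1 P j1 \<and> continuous_map B2 P j2 \<and>
     (\<forall>x\<in>topspace A. j1 (i1 x) = j2 (i2 x)) \<and>
     homeomorphic_map A (cgh_pullback B1 B2 j1 j2) (\<lambda>x. (i1 x, i2 x))"

text \<open>Test objects are CGH
  spaces whose points are sets of points of P (this suffices,
  since a CGH pushout of such a span is a quotient of the set-level pushout).\<close>
definition cgh_pushout_square ::
  "'a topology \<Rightarrow> 'b topology \<Rightarrow> 'c topology \<Rightarrow> 'p topology
   \<Rightarrow> ('a \<Rightarrow> 'b) \<Rightarrow> ('a \<Rightarrow> 'c) \<Rightarrow> ('b \<Rightarrow> 'p) \<Rightarrow> ('c \<Rightarrow> 'p) \<Rightarrow> bool" where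
  "cgh_pushout_square A B1 B2 P i1 i2 j1 j2 \<longleftrightarrow>
     continuous_map A B1 i1 \<and> continuous_map A B2 i2 \<and>
     continuous_map B1 P j1 \<and> continuous_map B2 P j2 \<and>
     (\<forall>x\<in>topspace A. j1 (i1 x) = j2 (i2 x)) \<and>
     (\<forall>(Z :: 'p set topology) f g.
        CGH_space Z \<and> continuous_map B1 Z f \<and> continuous_map B2 Z g \<and>
        (\<forall>x\<in>topspace A. f (i1 x) = g (i2 x)) \<longrightarrow>
        (\<exists>h. continuous_map P Z h \<and> (\<forall>y\<in>topspace B1. h (j1 y) = f y) \<and>
             (\<forall>y\<in>topspace B2. h (j2 y) = g y) \<and>
             (\<forall>h'. continuous_map P Z h' \<and> (\<forall>y\<in>topspace B1. h' (j1 y) = f y) \<and>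
                   (\<forall>y\<in>topspace B2. h' (j2 y) = g y) \<longrightarrow> (\<forall>z\<in>topspace P. h' z = h z))))"

end

theory Submission
  imports Defs
begin

definition pre_ext :: "'a topology \<Rightarrow> 'a option topology \<Rightarrow> bool" where
  "pre_ext X T \<longleftrightarrow> topspace T = pt_carrier X \<and> Hausdorff_space T \<and> embedding_map X T Some"

definition kc :: "'a topology \<Rightarrow> 'a option topology \<Rightarrow> 'a set \<Rightarrow> bool" where
  "kc X T D \<longleftrightarrow> (\<forall>U. openin T U \<longrightarrow> None \<in> U \<longrightarrow> compactin X (D - Some -` U))"

lemma pointed_pre: "pointed_ext X T \<Longrightarrow> pre_ext X T"
  by (simp add: pointed_ext_def pre_ext_def CGH_space_def)

lemma pre_cont: "pre_ext X T \<Longrightarrow> continuous_map X T Some"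
  unfolding pre_ext_def embedding_map_def
  using homeomorphic_imp_continuous_map continuous_map_in_subtopology by blast

lemma pre_sub: "pre_ext X T \<Longrightarrow> openin T U \<Longrightarrow> U \<subseteq> pt_carrier X"
  unfolding pre_ext_def using openin_subset by blast

lemma vimage_sub: "U \<subseteq> pt_carrier X \<Longrightarrow> Some -` U \<subseteq> topspace X"
  unfolding pt_carrier_def by auto

lemma pre_open_vimage: assumes "pre_ext X T" "openin T U" shows "openin X (Some -` U)"
proof -
  have "openin X {x \<in> topspace X. Some x \<in> U}"
    using openin_continuous_map_preimage[OF pre_cont[OF assms(1)] assms(2)] .
  moreover have "{x \<in> topspace X. Some x \<in> U} = Some -` U"
    using vimage_sub[OF pre_sub[OF assms]] by auto
  ultimately show ?thesis by simp
qed

lemma pre_open_X: assumes "pre_ext X T" shows "openin T (Some ` topspace X)"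
proof -
  have "closedin T {None}"
    using assms unfolding pre_ext_def pt_carrier_def
    by (simp add: closedin_Hausdorff_singleton)
  then have "openin T (topspace T - {None})" by auto
  moreover have "topspace T - {None} = Some ` topspace X"
    using assms unfolding pre_ext_def pt_carrier_def by auto
  ultimately show ?thesis by simp
qed

lemma pre_open_img: assumes "pre_ext X T" "openin X V" shows "openin T (Some ` V)"
proof -
  have h: "homeomorphic_map X (subtopology T (Some ` topspace X)) Some"
    using assms unfolding pre_ext_def embedding_map_def by blast
  have "openin (subtopology T (Some ` topspace X)) (Some ` V)"
    using homeomorphic_map_openness[OF h openin_subset[OF assms(2)]] assms(2) by simp
  then show ?thesis using openin_trans_full pre_open_X[OF assms(1)] by blast
qed

lemma pre_compact: assumes "pre_ext X T" "D \<subseteq> topspace X"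
  shows "compactin T (Some ` D) \<longleftrightarrow> compactin X D"
proof -
  have h: "homeomorphic_map X (subtopology T (Some ` topspace X)) Some"
    using assms unfolding pre_ext_def embedding_map_def by blast
  show ?thesis
    using homeomorphic_map_compactness[OF h assms(2)] assms(2) by (auto simp: compactin_subtopology)
qed

lemma pre_compact_closed: "pre_ext X T \<Longrightarrow> compactin T K \<Longrightarrow> closedin T K"
  unfolding pre_ext_def using compactin_imp_closedin by blast

lemma kc_closed_sub: "kc X T D \<Longrightarrow> closedin X E \<Longrightarrow> kc X T (D \<inter> E)"
  unfolding kc_def
proof clarify
  fix U assume "\<forall>U. openin T U \<longrightarrow> None \<in> U \<longrightarrow> compactin X (D - Some -` U)" "closedin X E" "openin T U" "None \<in> U"
  then have "compactin X ((D - Some -` U) \<inter> E)" using compact_Int_closedin by blast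
  moreover have "(D - Some -` U) \<inter> E = D \<inter> E - Some -` U" by blast
  ultimately show "compactin X (D \<inter> E - Some -` U)" by simp
qed

lemma compact_kc: assumes "pre_ext X T" "compactin X D" shows "kc X T D"
  unfolding kc_def
proof clarify
  fix U assume "openin T U" "None \<in> U"
  then have "openin X (Some -` U)" using pre_open_vimage assms by blast
  then have "closedin X (topspace X - Some -` U)" by auto
  then have "compactin X (D \<inter> (topspace X - Some -` U))" using compact_Int_closedin assms by blast
  moreover have "D \<inter> (topspace X - Some -` U) = D - Some -` U" using compactin_subset_topspace[OF assms(2)] by blast
  ultimately show "compactin X (D - Some -` U)" by simp
qed

lemma kc_compact_T: assumes "pre_ext X T" "Y \<subseteq> topspace X" "kc X T Y"
  shows "compactin T (insert None (Some ` Y))"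
  unfolding compactin_def
proof (intro conjI allI impI)
  show "insert None (Some ` Y) \<subseteq> topspace T"
    using assms unfolding pre_ext_def pt_carrier_def by auto
  fix \<U> assume U: "Ball \<U> (openin T) \<and> insert None (Some ` Y) \<subseteq> \<Union> \<U>"
  then obtain U0 where U0: "U0 \<in> \<U>" "None \<in> U0" by auto
  then have "compactin X (Y - Some -` U0)" using assms(3) U unfolding kc_def by blast
  then have c: "compactin T (Some ` (Y - Some -` U0))" using pre_compact[OF assms(1)] assms(2) by blast
  have "Some ` (Y - Some -` U0) \<subseteq> \<Union> \<U>" using U by auto
  then obtain \<F> where F: "finite \<F>" "\<F> \<subseteq> \<U>" "Some ` (Y - Some -` U0) \<subseteq> \<Union> \<F>"
    using c U unfolding compactin_def by meson
  show "\<exists>\<F>. finite \<F> \<and> \<F> \<subseteq> \<U> \<and> insert None (Some ` Y) \<subseteq> \<Union> \<F>"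
    apply (rule exI[of _ "insert U0 \<F>"]) using F U0 by auto
qed

lemma compact_None_kc: assumes "pre_ext X T" "compactin T K"
  shows "kc X T (Some -` K) \<and> closedin X (Some -` K)"
proof
  have KT: "K \<subseteq> pt_carrier X" using compactin_subset_topspace[OF assms(2)] assms(1) unfolding pre_ext_def by simp
  show "kc X T (Some -` K)" unfolding kc_def
  proof clarify
    fix U assume "openin T U" "None \<in> U"
    then have "closedin T (topspace T - U)" by auto
    then have "compactin T (K \<inter> (topspace T - U))" using compact_Int_closedin assms by blast
    moreover have "K \<inter> (topspace T - U) = Some ` (Some -` K - Some -` U)"
      using KT \<open>None \<in> U\<close> compactin_subset_topspace[OF assms(2)] unfolding pt_carrier_def by auto
    ultimately have "compactin T (Some ` (Some -` K - Some -` U))" by simp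
    then show "compactin X (Some -` K - Some -` U)"
    proof -
      have sub: "Some -` K - Some -` U \<subseteq> topspace X" using vimage_sub[OF KT] by blast
      show ?thesis using \<open>compactin T (Some ` (Some -` K - Some -` U))\<close> pre_compact[OF assms(1) sub] by simp
    qed
  qed
  have "closedin X {x \<in> topspace X. Some x \<in> K}"
    using closedin_continuous_map_preimage[OF pre_cont[OF assms(1)] pre_compact_closed[OF assms]] .
  moreover have "{x \<in> topspace X. Some x \<in> K} = Some -` K" using vimage_sub[OF KT] by auto
  ultimately show "closedin X (Some -` K)" by simp
qed

lemma pointed_open_char:
  assumes "pointed_ext X T"
  shows "openin T U \<longleftrightarrow> U \<subseteq> pt_carrier X \<and> openin X (Some -` U) \<and>
     (None \<in> U \<longrightarrow> (\<forall>D. closedin X D \<and> kc X T D \<longrightarrow> compactin X (D - Some -` U)))"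
  (is "?lhs \<longleftrightarrow> ?rhs")
proof
  have P: "pre_ext X T" using assms by (rule pointed_pre)
  show "openin T U \<Longrightarrow> ?rhs" using pre_sub[OF P] pre_open_vimage[OF P] unfolding kc_def by blast
  assume R: ?rhs
  show "openin T U"
  proof (cases "None \<in> U")
    case False
    then have "U = Some ` (Some -` U)" using R unfolding pt_carrier_def by auto
    then show ?thesis using pre_open_img[OF P] R by metis
  next
    case True
    have ks: "k_space T" using assms unfolding pointed_ext_def CGH_space_def by blast
    have "U \<subseteq> topspace T" using R P unfolding pre_ext_def by simp
    moreover have "openin (subtopology T K) (K \<inter> U)" if K: "compactin T K" for K
    proof -
      have KT: "K \<subseteq> pt_carrier X" using compactin_subset_topspace[OF K] P unfolding pre_ext_def by simp
      have "compactin X (Some -` K - Some -` U)"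
      proof (cases "None \<in> K")
        case True
        then show ?thesis using compact_None_kc[OF P K] R \<open>None \<in> U\<close> by blast
      next
        case False
        then have "K = Some ` (Some -` K)" using KT unfolding pt_carrier_def by auto
        then have "compactin X (Some -` K)" using pre_compact[OF P vimage_sub[OF KT]] K by metis
        moreover have "closedin X (topspace X - Some -` U)" using R by auto
        ultimately have "compactin X (Some -` K \<inter> (topspace X - Some -` U))" using compact_Int_closedin by blast
        moreover have "Some -` K \<inter> (topspace X - Some -` U) = Some -` K - Some -` U" using vimage_sub[OF KT] by blast
        ultimately show ?thesis by simp
      qed
      then have "compactin T (Some ` (Some -` K - Some -` U))" using pre_compact[OF P] vimage_sub[OF KT] by blast
      then have cl: "closedin T (K - U)"
      proof -
        assume "compactin T (Some ` (Some -` K - Some -` U))"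
        moreover have "Some ` (Some -` K - Some -` U) = K - U" using KT True unfolding pt_carrier_def by auto
        ultimately show ?thesis using pre_compact_closed[OF P] by metis
      qed
      have "openin (subtopology T K) (K \<inter> (topspace T - (K - U)))"
        using openin_subtopology_Int2 cl by blast
      moreover have "K \<inter> (topspace T - (K - U)) = K \<inter> U"
        using compactin_subset_topspace[OF K] by auto
      ultimately show ?thesis by simp
    qed
    ultimately show ?thesis using ks unfolding k_space_open by blast
  qed
qed



lemma openin_plus: "openin (plus_ext X) U \<longleftrightarrow> U \<subseteq> pt_carrier X \<and> openin X (Some -` U)"
proof -
  have "istopology (\<lambda>U. U \<subseteq> pt_carrier X \<and> openin X (Some -` U))"
    unfolding istopology_def
  proof (rule conjI)
    show "\<forall>S T. S \<subseteq> pt_carrier X \<and> openin X (Some -` S) \<longrightarrow> T \<subseteq> pt_carrier X \<and> openin X (Some -` T) \<longrightarrow> S \<inter> T \<subseteq> pt_carrier X \<and> openin X (Some -` (S \<inter> T))"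
      by auto
    have "Some -` \<Union>K = \<Union>((\<lambda>S. Some -` S) ` K)" for K :: "'a option set set" by auto
    then show "\<forall>K. (\<forall>S\<in>K. S \<subseteq> pt_carrier X \<and> openin X (Some -` S)) \<longrightarrow> \<Union>K \<subseteq> pt_carrier X \<and> openin X (Some -` \<Union>K)"
      by auto
  qed
  then show ?thesis unfolding plus_ext_def by (simp add: topology_inverse')
qed

lemma topspace_plus: "topspace (plus_ext X) = pt_carrier X"
proof -
  have "openin (plus_ext X) (pt_carrier X)"
  proof -
    have "Some -` insert None (Some ` topspace X) = topspace X" by auto
    then show ?thesis unfolding openin_plus pt_carrier_def by simp
  qed
  then have "pt_carrier X \<subseteq> topspace (plus_ext X)" using openin_subset by (metis openin_topspace subset_refl openin_subset
     )
  moreover have "topspace (plus_ext X) \<subseteq> pt_carrier X"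
    using openin_plus[of X "topspace (plus_ext X)"] by simp
  ultimately show ?thesis by blast
qed

lemma kc_id_cont: assumes T: "pre_ext X T" and S: "pre_ext X S" and D: "D \<subseteq> topspace X" "kc X S D"
  shows "continuous_map (subtopology T (insert None (Some ` D))) S id"
  unfolding continuous_map
proof (intro conjI allI impI)
  let ?C = "insert None (Some ` D)"
  have CT: "?C \<subseteq> pt_carrier X" using D unfolding pt_carrier_def by auto
  show "id ` topspace (subtopology T ?C) \<subseteq> topspace S"
    using T S unfolding pre_ext_def by auto
  fix V assume V: "openin S V"
  have VS: "V \<subseteq> pt_carrier X" using pre_sub[OF S V] .
  have eq: "{x \<in> topspace (subtopology T ?C). id x \<in> V} = ?C \<inter> V"
    using T CT unfolding pre_ext_def by auto
  show "openin (subtopology T ?C) {x \<in> topspace (subtopology T ?C). id x \<in> V}"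
  proof (cases "None \<in> V")
    case False
    then have "V = Some ` (Some -` V)" using VS unfolding pt_carrier_def by auto
    then have "openin T V" using pre_open_img[OF T pre_open_vimage[OF S V]] by metis
    then show ?thesis unfolding eq by (simp add: openin_subtopology_Int2)
  next
    case True
    then have "compactin X (D - Some -` V)" using D V unfolding kc_def by blast
    then have "compactin T (Some ` (D - Some -` V))" using pre_compact[OF T] D by blast
    then have "closedin T (Some ` (D - Some -` V))" using pre_compact_closed[OF T] by blast
    then have "openin T (topspace T - Some ` (D - Some -` V))" by auto
    moreover have "?C \<inter> (topspace T - Some ` (D - Some -` V)) = ?C \<inter> V"
      using T True CT unfolding pre_ext_def by auto
    ultimately show ?thesis unfolding eq by (metis openin_subtopology_Int2)
  qed
qed



lemma fib_P: "ext_fibprod T S = kification (subtopology (prod_topology T S) {(a, b) \<in> topspace T \<times> topspace S. a = b})"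
  unfolding ext_fibprod_def cgh_pullback_def by simp

lemma fib_char:
  assumes kX: "k_space X" and T: "pre_ext X T" and S: "pre_ext X S"
  shows "homeomorphic_map (plus_ext X) (ext_fibprod T S) (\<lambda>p. (p,p)) \<longleftrightarrow>
         (\<forall>D. closedin X D \<and> kc X T D \<and> kc X S D \<longrightarrow> compactin X D)"
proof -
  define \<Delta> where "\<Delta> = {(a, b) \<in> topspace T \<times> topspace S. a = b}"
  define P where "P = subtopology (prod_topology T S) \<Delta>"
  have Q: "ext_fibprod T S = kification P" unfolding P_def \<Delta>_def fib_P ..
  have tT: "topspace T = pt_carrier X" and tS: "topspace S = pt_carrier X"
    using T S unfolding pre_ext_def by auto
  have tP: "topspace P = \<Delta>" unfolding P_def \<Delta>_def by auto
  have \<Delta>eq: "\<Delta> = (\<lambda>p. (p,p)) ` pt_carrier X" unfolding \<Delta>_def tT tS by auto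
  have dX: "continuous_map X P (\<lambda>x. (Some x, Some x))"
    unfolding P_def continuous_map_in_subtopology continuous_map_paired
    using pre_cont[OF T] pre_cont[OF S] unfolding \<Delta>_def tT tS pt_carrier_def by auto
  have dXQ: "continuous_map X (kification P) (\<lambda>x. (Some x, Some x))"
    using continuous_map_into_kification[OF kX] dX by blast
  have HP: "Hausdorff_space P"
    unfolding P_def using T S unfolding pre_ext_def
    by (simp add: Hausdorff_space_subtopology Hausdorff_space_prod_topology)
  have NN: "openin (kification P) {(None,None)}"
    if Cnd: "\<forall>D. closedin X D \<and> kc X T D \<and> kc X S D \<longrightarrow> compactin X D"
    unfolding openin_kification
  proof (intro conjI allI impI)
    show "{(None, None)} \<subseteq> topspace P" unfolding tP \<Delta>eq pt_carrier_def by auto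
    fix K assume K: "compactin P K"
    have KP: "K \<subseteq> \<Delta>" using compactin_subset_topspace[OF K] tP by simp
    show "openin (subtopology P K) (K \<inter> {(None, None)})"
    proof (cases "(None,None) \<in> K")
      case False
      then have "K \<inter> {(None, None)} = {}" by auto
      then show ?thesis by simp
    next
      case True
      have cT: "compactin T (fst ` K)"
        using image_compactin[OF K, of T fst] unfolding P_def by (simp add: continuous_map_subtopology_fst)
      have cS: "compactin S (snd ` K)"
        using image_compactin[OF K, of S snd] unfolding P_def by (simp add: continuous_map_subtopology_snd)
      have fs: "snd ` K = fst ` K" using KP unfolding \<Delta>_def by force
      define D where "D = Some -` fst ` K"
      have kT: "kc X T D" "closedin X D" using compact_None_kc[OF T cT] unfolding D_def by auto
      have kS: "kc X S D" using compact_None_kc[OF S cS] unfolding D_def fs by auto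
      have cD: "compactin X D" using Cnd kT kS by blast
      define E where "E = (\<lambda>x. (Some x, Some x)) ` D"
      have "compactin P E" unfolding E_def using image_compactin[OF cD dX] .
      then have "closedin P E" using compactin_imp_closedin HP by blast
      then have "openin P (topspace P - E)" by auto
      then have "openin (subtopology P K) (K \<inter> (topspace P - E))" by (simp add: openin_subtopology_Int2)
      moreover have "K \<inter> (topspace P - E) = K \<inter> {(None, None)}"
      proof (intro equalityI subsetI)
        fix z assume z: "z \<in> K \<inter> (topspace P - E)"
        then obtain a where a: "z = (a,a)" using KP unfolding \<Delta>_def by auto
        show "z \<in> K \<inter> {(None, None)}"
        proof (cases a)
          case (Some x)
          then have "x \<in> D" unfolding D_def using z a by force
          then show ?thesis using z a Some unfolding E_def by auto
        qed (use z a in auto)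
      next
        fix z assume "z \<in> K \<inter> {(None, None)}"
        then show "z \<in> K \<inter> (topspace P - E)" using KP tP unfolding E_def by auto
      qed
      ultimately show ?thesis by simp
    qed
  qed
  show ?thesis
  proof
    assume H: "homeomorphic_map (plus_ext X) (ext_fibprod T S) (\<lambda>p. (p,p))"
    have e: "Some -` {None} = {}" by auto
    have oN: "openin (plus_ext X) {None}" unfolding openin_plus pt_carrier_def e by simp
    have "openin (kification P) ((\<lambda>p. (p,p)) ` {None})"
      using homeomorphic_map_openness[OF H[unfolded Q], of "{None}"] oN openin_subset by blast
    then have oNN: "openin (kification P) {(None,None)}" by simp
    show "\<forall>D. closedin X D \<and> kc X T D \<and> kc X S D \<longrightarrow> compactin X D"
    proof clarify
      fix D assume D: "closedin X D" "kc X T D" "kc X S D"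
      have DX: "D \<subseteq> topspace X" using closedin_subset[OF D(1)] .
      define C where "C = insert None (Some ` D)"
      have CX: "C \<subseteq> pt_carrier X" unfolding C_def pt_carrier_def using DX by auto
      have cT: "compactin T C" unfolding C_def using kc_compact_T[OF T DX D(2)] .
      have cont: "continuous_map (subtopology T C) P (\<lambda>p. (id p, id p))"
        unfolding P_def continuous_map_in_subtopology continuous_map_paired
        using continuous_map_id_subt kc_id_cont[OF T S DX D(3)] CX unfolding C_def \<Delta>_def tT tS id_def
        by auto
      have "compactin (subtopology T C) C" using cT by (simp add: compactin_subtopology)
      then have KP: "compactin P ((\<lambda>p. (p, p)) ` C)" using image_compactin[OF _ cont] by simp
      define K where "K = (\<lambda>p. (p, p)) ` C"
      have KP': "compactin P K" using KP unfolding K_def .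
      have "openin (subtopology P K) (K \<inter> {(None,None)})"
        using oNN KP' unfolding openin_kification by blast
      moreover have tK: "topspace (subtopology P K) = K" using compactin_subset_topspace[OF KP'] by auto
      ultimately have "closedin (subtopology P K) (K - {(None,None)})"
        unfolding closedin_def by (metis Diff_Diff_Int Diff_subset inf_commute)
      then have "compactin (subtopology P K) (K - {(None,None)})"
        using closedin_compact_space compact_space_subtopology[OF KP'] by blast
      then have "compactin P (K - {(None,None)})" by (simp add: compactin_subtopology)
      then have "compactin T (fst ` (K - {(None,None)}))"
        using image_compactin unfolding P_def by (metis continuous_map_subtopology_fst)
      moreover have "fst ` (K - {(None,None)}) = Some ` D" unfolding K_def C_def by (auto simp: image_iff)
      ultimately show "compactin X D" using pre_compact[OF T DX] by simp
    qed
  next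
    assume Cnd: "\<forall>D. closedin X D \<and> kc X T D \<and> kc X S D \<longrightarrow> compactin X D"
    show "homeomorphic_map (plus_ext X) (ext_fibprod T S) (\<lambda>p. (p,p))"
      unfolding Q
    proof (rule bijective_open_imp_homeomorphic_map)
      show "(\<lambda>p. (p, p)) ` topspace (plus_ext X) = topspace (kification P)"
        by (simp add: topspace_plus tP \<Delta>eq)
      show "inj_on (\<lambda>p. (p, p)) (topspace (plus_ext X))" by (simp add: inj_on_def)
      show "continuous_map (plus_ext X) (kification P) (\<lambda>p. (p, p))"
        unfolding continuous_map
      proof (intro conjI allI impI)
        show "(\<lambda>p. (p, p)) ` topspace (plus_ext X) \<subseteq> topspace (kification P)"
          by (simp add: topspace_plus tP \<Delta>eq)
        fix V assume V: "openin (kification P) V"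
        have "openin X {x \<in> topspace X. (Some x, Some x) \<in> V}"
          using openin_continuous_map_preimage[OF dXQ V] .
        moreover have "Some -` {x \<in> topspace (plus_ext X). (x, x) \<in> V} = {x \<in> topspace X. (Some x, Some x) \<in> V}"
          unfolding topspace_plus pt_carrier_def by auto
        ultimately show "openin (plus_ext X) {x \<in> topspace (plus_ext X). (x, x) \<in> V}"
          unfolding openin_plus topspace_plus by auto
      qed
      show "open_map (plus_ext X) (kification P) (\<lambda>p. (p, p))"
        unfolding open_map_def
      proof clarify
        fix U assume U: "openin (plus_ext X) U"
        define V where "V = Some -` U"
        have V: "openin X V" "U \<subseteq> pt_carrier X" using U unfolding openin_plus V_def by auto
        have "openin (prod_topology T S) (Some ` V \<times> Some ` V)"
          using pre_open_img[OF T V(1)] pre_open_img[OF S V(1)] by (simp add: openin_prod_Times_iff)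
        then have "openin P (\<Delta> \<inter> (Some ` V \<times> Some ` V))" unfolding P_def by (simp add: openin_subtopology_Int2)
        moreover have "\<Delta> \<inter> (Some ` V \<times> Some ` V) = (\<lambda>p. (p, p)) ` (Some ` V)"
          using V(2) unfolding \<Delta>eq V_def by auto
        ultimately have o1: "openin (kification P) ((\<lambda>p. (p, p)) ` (Some ` V))"
          by (simp add: openin_kification_finer)
        show "openin (kification P) ((\<lambda>p. (p, p)) ` U)"
        proof (cases "None \<in> U")
          case False
          then have "U = Some ` V" using V(2) unfolding V_def pt_carrier_def by auto
          then show ?thesis using o1 by simp
        next
          case True
          then have "(\<lambda>p. (p, p)) ` U = (\<lambda>p. (p, p)) ` (Some ` V) \<union> {(None,None)}"
            using V(2) unfolding V_def pt_carrier_def by auto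
          then show ?thesis using openin_Un[OF o1 NN[OF Cnd]] by simp
        qed
      qed
    qed
  qed
qed



definition negtop :: "'a topology \<Rightarrow> 'a option topology \<Rightarrow> 'a option topology" where
  "negtop X T = topology (\<lambda>U. U \<subseteq> pt_carrier X \<and> openin X (Some -` U) \<and>
      (None \<in> U \<longrightarrow> kc X T (topspace X - Some -` U)))"

lemma kc_Un: "kc X T A \<Longrightarrow> kc X T B \<Longrightarrow> kc X T (A \<union> B)"
  unfolding kc_def
proof clarify
  fix U assume "\<forall>U. openin T U \<longrightarrow> None \<in> U \<longrightarrow> compactin X (A - Some -` U)"
    "\<forall>U. openin T U \<longrightarrow> None \<in> U \<longrightarrow> compactin X (B - Some -` U)" "openin T U" "None \<in> U"
  then have "compactin X ((A - Some -` U) \<union> (B - Some -` U))" by (simp add: compactin_Un)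
  moreover have "(A - Some -` U) \<union> (B - Some -` U) = A \<union> B - Some -` U" by blast
  ultimately show "compactin X (A \<union> B - Some -` U)" by simp
qed

lemma kc_empty: "kc X T {}"
  unfolding kc_def by simp

lemma openin_negtop: "openin (negtop X T) U \<longleftrightarrow> U \<subseteq> pt_carrier X \<and> openin X (Some -` U) \<and>
      (None \<in> U \<longrightarrow> kc X T (topspace X - Some -` U))"
proof -
  let ?L = "\<lambda>U. U \<subseteq> pt_carrier X \<and> openin X (Some -` U) \<and> (None \<in> U \<longrightarrow> kc X T (topspace X - Some -` U))"
  have "istopology ?L"
    unfolding istopology_def
  proof (rule conjI)
    show "\<forall>S U. ?L S \<longrightarrow> ?L U \<longrightarrow> ?L (S \<inter> U)"
    proof (intro allI impI)
      fix S U assume S: "?L S" and U: "?L U"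
      have e: "topspace X - Some -` (S \<inter> U) = (topspace X - Some -` S) \<union> (topspace X - Some -` U)" by blast
      show "?L (S \<inter> U)" using S U unfolding e by (auto intro: kc_Un)
    qed
    show "\<forall>K. (\<forall>S\<in>K. ?L S) \<longrightarrow> ?L (\<Union>K)"
    proof (intro allI impI)
      fix K assume K: "\<forall>S\<in>K. ?L S"
      have e: "Some -` \<Union>K = \<Union>((\<lambda>S. Some -` S) ` K)" by auto
      have o: "openin X (Some -` \<Union>K)" unfolding e using K by auto
      have "kc X T (topspace X - Some -` \<Union>K)" if NK: "None \<in> \<Union>K"
      proof -
        obtain U0 where U0: "U0 \<in> K" "None \<in> U0" using NK by auto
        then have "kc X T (topspace X - Some -` U0)" using K by blast
        then have "kc X T ((topspace X - Some -` U0) \<inter> (topspace X - Some -` \<Union>K))"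
          using kc_closed_sub o by blast
        moreover have "(topspace X - Some -` U0) \<inter> (topspace X - Some -` \<Union>K) = topspace X - Some -` \<Union>K"
          using U0 by blast
        ultimately show ?thesis by simp
      qed
      then show "?L (\<Union>K)" using K o by auto
    qed
  qed
  then show ?thesis unfolding negtop_def by (simp add: topology_inverse')
qed

lemma topspace_negtop: "topspace (negtop X T) = pt_carrier X"
proof -
  have e: "Some -` pt_carrier X = topspace X" unfolding pt_carrier_def by auto
  have "openin (negtop X T) (pt_carrier X)"
    unfolding openin_negtop e by (simp add: kc_empty)
  then have "pt_carrier X \<subseteq> topspace (negtop X T)" by (simp add: openin_subset)
  moreover have "topspace (negtop X T) \<subseteq> pt_carrier X"
    using openin_negtop[of X T "topspace (negtop X T)"] by simp
  ultimately show ?thesis by blast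
qed

lemma negtop_open_img: "openin X V \<Longrightarrow> openin (negtop X T) (Some ` V)"
  unfolding openin_negtop pt_carrier_def using openin_subset by (fastforce simp: inj_vimage_image_eq)

lemma negtop_pre:
  assumes lc: "locally_compact_space X" and H: "Hausdorff_space X" and T: "pre_ext X T"
  shows "pre_ext X (negtop X T)"
  unfolding pre_ext_def
proof (intro conjI)
  let ?N = "negtop X T"
  show "topspace ?N = pt_carrier X" by (rule topspace_negtop)
  have sep: "\<exists>U V. openin ?N U \<and> openin ?N V \<and> None \<in> U \<and> Some x \<in> V \<and> disjnt U V"
    if x: "x \<in> topspace X" for x
  proof -
    obtain V K where VK: "openin X V" "compactin X K" "x \<in> V" "V \<subseteq> K"
      using lc x unfolding locally_compact_space_def by blast
    have Kc: "closedin X K" using compactin_imp_closedin[OF H VK(2)] .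
    have KX: "K \<subseteq> topspace X" using closedin_subset[OF Kc] .
    define W where "W = pt_carrier X - Some ` K"
    have e: "Some -` W = topspace X - K" unfolding W_def pt_carrier_def by auto
    have "topspace X - Some -` W = K" unfolding e using KX by blast
    then have "openin ?N W" unfolding openin_negtop W_def[symmetric] 
      using e Kc compact_kc[OF T VK(2)] unfolding W_def pt_carrier_def by auto
    moreover have "openin ?N (Some ` V)" using negtop_open_img VK(1) by blast
    moreover have "disjnt W (Some ` V)" using VK(4) unfolding W_def disjnt_def by auto
    ultimately show ?thesis using VK(3) unfolding W_def pt_carrier_def by blast
  qed
  show "Hausdorff_space ?N"
    unfolding Hausdorff_space_def topspace_negtop
  proof clarify
    fix p q assume p: "p \<in> pt_carrier X" and q: "q \<in> pt_carrier X" and pq: "p \<noteq> q"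
    show "\<exists>U V. openin ?N U \<and> openin ?N V \<and> p \<in> U \<and> q \<in> V \<and> disjnt U V"
    proof (cases p)
      case None
      then obtain y where "q = Some y" "y \<in> topspace X" using q pq unfolding pt_carrier_def by auto
      then show ?thesis using sep None by blast
    next
      case (Some x)
      note px = Some
      show ?thesis
      proof (cases q)
        case None
        obtain U V where "openin ?N U" "openin ?N V" "None \<in> U" "Some x \<in> V" "disjnt U V"
          using sep[of x] p px unfolding pt_carrier_def by auto
        then show ?thesis using None px by (meson disjnt_sym)
      next
        case (Some y)
        have "x \<in> topspace X" "y \<in> topspace X" "x \<noteq> y" using p q pq px Some unfolding pt_carrier_def by auto
        then obtain U V where "openin X U" "openin X V" "x \<in> U" "y \<in> V" "disjnt U V"
          using H unfolding Hausdorff_space_def by blast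
        then show ?thesis using negtop_open_img[of X U T] negtop_open_img[of X V T] px Some
          by (intro exI[of _ "Some ` U"] exI[of _ "Some ` V"]) (auto simp: disjnt_def)
      qed
    qed
  qed
  show "embedding_map X ?N Some"
  proof (rule injective_open_imp_embedding_map)
    show "continuous_map X ?N Some"
      unfolding continuous_map
    proof (intro conjI allI impI)
      show "Some ` topspace X \<subseteq> topspace ?N" unfolding topspace_negtop pt_carrier_def by auto
      fix U assume "openin ?N U"
      then have "openin X (Some -` U)" "U \<subseteq> pt_carrier X" unfolding openin_negtop by auto
      moreover have "{x \<in> topspace X. Some x \<in> U} = Some -` U" using calculation(2) unfolding pt_carrier_def by auto
      ultimately show "openin X {x \<in> topspace X. Some x \<in> U}" by simp
    qed
    show "open_map X ?N Some" unfolding open_map_def using negtop_open_img by blast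
    show "inj_on Some (topspace X)" by simp
  qed
qed



lemma negtop_k:
  assumes lc: "locally_compact_space X" and H: "Hausdorff_space X" and T: "pre_ext X T"
  shows "k_space (negtop X T)"
  unfolding k_space_open
proof clarify
  let ?N = "negtop X T"
  have N: "pre_ext X ?N" using negtop_pre[OF assms] .
  have kX: "k_space X" using locally_compact_imp_k_space[OF lc] .
  fix U assume US: "U \<subseteq> topspace ?N" and UK: "\<forall>K. compactin ?N K \<longrightarrow> openin (subtopology ?N K) (K \<inter> U)"
  have UC: "U \<subseteq> pt_carrier X" using US topspace_negtop by metis
  have oU: "openin X (Some -` U)"
    unfolding k_space_open[THEN iffD1, OF kX, rule_format]
  proof -
    have "openin (subtopology X L) (L \<inter> Some -` U)" if L: "compactin X L" for L
    proof -
      have cL: "compactin ?N (Some ` L)" using image_compactin[OF L pre_cont[OF N]] .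
      have "openin (subtopology ?N (Some ` L)) (Some ` L \<inter> U)" using UK cL by blast
      moreover have "continuous_map (subtopology X L) (subtopology ?N (Some ` L)) Some"
        using pre_cont[OF N] by (auto simp: continuous_map_in_subtopology continuous_map_from_subtopology)
      ultimately have "openin (subtopology X L) {x \<in> topspace (subtopology X L). Some x \<in> Some ` L \<inter> U}"
        using openin_continuous_map_preimage by blast
      moreover have "{x \<in> topspace (subtopology X L). Some x \<in> Some ` L \<inter> U} = L \<inter> Some -` U"
        using compactin_subset_topspace[OF L] by auto
      ultimately show ?thesis by simp
    qed
    moreover have "Some -` U \<subseteq> topspace X" using vimage_sub[OF UC] .
    ultimately show "openin X (Some -` U)" using kX unfolding k_space_open by blast
  qed
  have "kc X T (topspace X - Some -` U)" if NU: "None \<in> U"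
    unfolding kc_def
  proof clarify
    fix U0 assume U0: "openin T U0" "None \<in> U0"
    define Y where "Y = topspace X - Some -` U0"
    have YX: "Y \<subseteq> topspace X" unfolding Y_def by blast
    have kY: "kc X ?N Y" unfolding kc_def
    proof clarify
      fix U1 assume U1: "openin ?N U1" "None \<in> U1"
      then have "kc X T (topspace X - Some -` U1)" unfolding openin_negtop by blast
      then have "compactin X (topspace X - Some -` U1 - Some -` U0)" using U0 unfolding kc_def by blast
      moreover have "topspace X - Some -` U1 - Some -` U0 = Y - Some -` U1" unfolding Y_def by blast
      ultimately show "compactin X (Y - Some -` U1)" by simp
    qed
    define K where "K = insert None (Some ` Y)"
    have cK: "compactin ?N K" unfolding K_def using kc_compact_T[OF N YX kY] .
    have "openin (subtopology ?N K) (K \<inter> U)" using UK cK by blast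
    moreover have tK: "topspace (subtopology ?N K) = K" using compactin_subset_topspace[OF cK] by auto
    ultimately have "closedin (subtopology ?N K) (K - U)"
      unfolding closedin_def by (metis Diff_Diff_Int Diff_subset inf_commute)
    then have "compactin (subtopology ?N K) (K - U)"
      using closedin_compact_space compact_space_subtopology[OF cK] by blast
    then have "compactin ?N (K - U)" by (simp add: compactin_subtopology)
    moreover have "K - U = Some ` (Y - Some -` U)" unfolding K_def using NU by auto
    ultimately have "compactin X (Y - Some -` U)" using pre_compact[OF N] YX by (metis Diff_subset order_trans)
    moreover have "Y - Some -` U = topspace X - Some -` U - Some -` U0" unfolding Y_def by blast
    ultimately show "compactin X (topspace X - Some -` U - Some -` U0)" by simp
  qed
  then show "openin ?N U" unfolding openin_negtop using UC oU by blast
qed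

lemma negtop_pointed:
  assumes lc: "locally_compact_space X" and H: "Hausdorff_space X" and T: "pre_ext X T"
  shows "pointed_ext X (negtop X T)"
  using negtop_pre[OF assms] negtop_k[OF assms] unfolding pointed_ext_def pre_ext_def CGH_space_def by blast

lemma negtop_cand:
  assumes lc: "locally_compact_space X" and H: "Hausdorff_space X" and T: "pre_ext X T"
  shows "homeomorphic_map (plus_ext X) (ext_fibprod T (negtop X T)) (\<lambda>p. (p,p))"
proof (subst fib_char[OF locally_compact_imp_k_space[OF lc] T negtop_pre[OF assms]], clarify)
  fix D assume D: "closedin X D" "kc X T D" "kc X (negtop X T) D"
  have DX: "D \<subseteq> topspace X" using closedin_subset[OF D(1)] .
  define U where "U = pt_carrier X - Some ` D"
  have e: "Some -` U = topspace X - D" unfolding U_def pt_carrier_def by auto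
  have e2: "topspace X - Some -` U = D" unfolding e using DX by blast
  have "openin (negtop X T) U" unfolding openin_negtop e2 unfolding e using D(1) D(2)
    unfolding U_def by (auto simp: pt_carrier_def)
  moreover have "None \<in> U" unfolding U_def pt_carrier_def by auto
  ultimately have "compactin X (D - Some -` U)" using D(3) unfolding kc_def by blast
  moreover have "D - Some -` U = D" unfolding e using DX by blast
  ultimately show "compactin X D" by simp
qed

lemma negtop_final:
  assumes lc: "locally_compact_space X" and H: "Hausdorff_space X" and T: "pre_ext X T"
    and S: "pointed_ext X S" and hS: "homeomorphic_map (plus_ext X) (ext_fibprod T S) (\<lambda>p. (p,p))"
  shows "ext_rel S (negtop X T)"
  unfolding ext_rel_def continuous_map
proof (intro conjI allI impI)
  have SP: "pre_ext X S" using pointed_pre[OF S] .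
  have Cnd: "\<forall>D. closedin X D \<and> kc X T D \<and> kc X S D \<longrightarrow> compactin X D"
    using fib_char[OF locally_compact_imp_k_space[OF lc] T SP] hS by blast
  show "id ` topspace S \<subseteq> topspace (negtop X T)" using SP unfolding pre_ext_def topspace_negtop by simp
  fix U assume U: "openin (negtop X T) U"
  have UC: "U \<subseteq> pt_carrier X" "openin X (Some -` U)" using U unfolding openin_negtop by auto
  have "openin S U"
    unfolding pointed_open_char[OF S]
  proof (intro conjI impI allI UC, clarify)
    fix D assume NU: "None \<in> U" and D: "closedin X D" "kc X S D"
    define E where "E = topspace X - Some -` U"
    have kE: "kc X T E" using U NU unfolding openin_negtop E_def by blast
    have cE: "closedin X E" unfolding E_def using UC(2) by blast
    have "kc X T (E \<inter> D)" using kc_closed_sub[OF kE D(1)] .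
    moreover have "kc X S (D \<inter> E)" using kc_closed_sub[OF D(2) cE] .
    moreover have "closedin X (D \<inter> E)" using D(1) cE by blast
    ultimately have "compactin X (D \<inter> E)" using Cnd by (metis inf_commute)
    moreover have "D \<inter> E = D - Some -` U" unfolding E_def using closedin_subset[OF D(1)] by blast
    ultimately show "compactin X (D - Some -` U)" by simp
  qed
  moreover have "{x \<in> topspace S. id x \<in> U} = U" using UC(1) SP unfolding pre_ext_def by auto
  ultimately show "openin S {x \<in> topspace S. id x \<in> U}" by simp
qed

lemma ext_rel_antisym:
  assumes "ext_rel A B" "ext_rel B A" "topspace A = topspace B"
  shows "A = B"
  unfolding topology_eq
proof
  fix U
  show "openin A U \<longleftrightarrow> openin B U"
  proof
    assume "openin A U"
    then have "openin B {x \<in> topspace B. id x \<in> U}" using assms(2) unfolding ext_rel_def continuous_map by blast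
    moreover have "{x \<in> topspace B. id x \<in> U} = U" using openin_subset[OF \<open>openin A U\<close>] assms(3) by auto
    ultimately show "openin B U" by simp
  next
    assume "openin B U"
    then have "openin A {x \<in> topspace A. id x \<in> U}" using assms(1) unfolding ext_rel_def continuous_map by blast
    moreover have "{x \<in> topspace A. id x \<in> U} = U" using openin_subset[OF \<open>openin B U\<close>] assms(3) by auto
    ultimately show "openin A U" by simp
  qed
qed

lemma neg_eq:
  assumes lc: "locally_compact_space X" and H: "Hausdorff_space X" and T: "pre_ext X T"
  shows "neg_ext X T = negtop X T"
  unfolding neg_ext_def
proof (rule the_equality)
  show "pointed_ext X (negtop X T) \<and> homeomorphic_map (plus_ext X) (ext_fibprod T (negtop X T)) (\<lambda>p. (p, p)) \<and>
    (\<forall>S. pointed_ext X S \<and> homeomorphic_map (plus_ext X) (ext_fibprod T S) (\<lambda>p. (p, p)) \<longrightarrow> ext_rel S (negtop X T))"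
    using negtop_pointed[OF assms] negtop_cand[OF assms] negtop_final[OF assms] by blast
  fix T' assume A: "pointed_ext X T' \<and> homeomorphic_map (plus_ext X) (ext_fibprod T T') (\<lambda>p. (p, p)) \<and>
    (\<forall>S. pointed_ext X S \<and> homeomorphic_map (plus_ext X) (ext_fibprod T S) (\<lambda>p. (p, p)) \<longrightarrow> ext_rel S T')"
  have r1: "ext_rel (negtop X T) T'" using A negtop_pointed[OF assms] negtop_cand[OF assms] by blast
  have r2: "ext_rel T' (negtop X T)" using A negtop_final[OF assms] by blast
  have "topspace T' = topspace (negtop X T)" using A unfolding pointed_ext_def topspace_negtop by simp
  then show "T' = negtop X T" using ext_rel_antisym[OF r2 r1] by simp
qed



lemma openin_opc: "openin (opc_ext X) U \<longleftrightarrow> U \<subseteq> pt_carrier X \<and> openin X (Some -` U) \<and>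
      (None \<in> U \<longrightarrow> compactin X (topspace X - Some -` U) \<and> closedin X (topspace X - Some -` U))"
proof -
  let ?L = "\<lambda>U. U \<subseteq> pt_carrier X \<and> openin X (Some -` U) \<and>
      (None \<in> U \<longrightarrow> compactin X (topspace X - Some -` U) \<and> closedin X (topspace X - Some -` U))"
  have "istopology ?L"
    unfolding istopology_def
  proof (rule conjI)
    show "\<forall>S U. ?L S \<longrightarrow> ?L U \<longrightarrow> ?L (S \<inter> U)"
    proof (intro allI impI)
      fix S U assume S: "?L S" and U: "?L U"
      have e: "topspace X - Some -` (S \<inter> U) = (topspace X - Some -` S) \<union> (topspace X - Some -` U)" by blast
      show "?L (S \<inter> U)" using S U unfolding e by (auto intro: compactin_Un)
    qed
    show "\<forall>K. (\<forall>S\<in>K. ?L S) \<longrightarrow> ?L (\<Union>K)"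
    proof (intro allI impI)
      fix K assume K: "\<forall>S\<in>K. ?L S"
      have e: "Some -` \<Union>K = \<Union>((\<lambda>S. Some -` S) ` K)" by auto
      have o: "openin X (Some -` \<Union>K)" unfolding e using K by auto
      have c: "closedin X (topspace X - Some -` \<Union>K)" using o by blast
      have "compactin X (topspace X - Some -` \<Union>K)" if NK: "None \<in> \<Union>K"
      proof -
        obtain U0 where U0: "U0 \<in> K" "None \<in> U0" using NK by auto
        then have "compactin X (topspace X - Some -` U0)" using K by blast
        moreover have "topspace X - Some -` \<Union>K \<subseteq> topspace X - Some -` U0" using U0 by blast
        ultimately show ?thesis using closed_compactin c by blast
      qed
      then show "?L (\<Union>K)" using K o c by auto
    qed
  qed
  then show ?thesis unfolding opc_ext_def by (simp add: topology_inverse')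
qed

lemma topspace_opc: "topspace (opc_ext X) = pt_carrier X"
proof -
  have e: "Some -` pt_carrier X = topspace X" unfolding pt_carrier_def by auto
  have "openin (opc_ext X) (pt_carrier X)"
    unfolding openin_opc e by simp
  then have "pt_carrier X \<subseteq> topspace (opc_ext X)" by (simp add: openin_subset)
  moreover have "topspace (opc_ext X) \<subseteq> pt_carrier X"
    using openin_opc[of X "topspace (opc_ext X)"] by simp
  ultimately show ?thesis by blast
qed

definition meet_sng :: "'a option topology \<Rightarrow> 'a option topology \<Rightarrow> 'a option set topology" where
  "meet_sng A B = topology (\<lambda>V. V \<subseteq> (\<lambda>p. {p}) ` topspace A \<and> openin A ((\<lambda>p. {p}) -` V) \<and> openin B ((\<lambda>p. {p}) -` V))"

lemma openin_meet_sng: "openin (meet_sng A B) V \<longleftrightarrow>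
   V \<subseteq> (\<lambda>p. {p}) ` topspace A \<and> openin A ((\<lambda>p. {p}) -` V) \<and> openin B ((\<lambda>p. {p}) -` V)"
proof -
  let ?L = "\<lambda>V. V \<subseteq> (\<lambda>p. {p}) ` topspace A \<and> openin A ((\<lambda>p. {p}) -` V) \<and> openin B ((\<lambda>p. {p}) -` V)"
  have "istopology ?L"
    unfolding istopology_def
  proof (rule conjI)
    show "\<forall>S U. ?L S \<longrightarrow> ?L U \<longrightarrow> ?L (S \<inter> U)" by auto
    have e: "(\<lambda>p. {p}) -` \<Union>K = \<Union>((\<lambda>S. (\<lambda>p. {p}) -` S) ` K)" for K :: "'a option set set set" by auto
    show "\<forall>K. (\<forall>S\<in>K. ?L S) \<longrightarrow> ?L (\<Union>K)"
      unfolding e by auto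
  qed
  then show ?thesis unfolding meet_sng_def by (simp add: topology_inverse')
qed

lemma meet_open_img:
  assumes "openin A W" "openin B W" shows "openin (meet_sng A B) ((\<lambda>p. {p}) ` W)"
proof -
  have "(\<lambda>p. {p}) -` ((\<lambda>p. {p}) ` W) = W" by auto
  then show ?thesis unfolding openin_meet_sng using assms openin_subset by fastforce
qed

lemma sep_None:
  assumes A: "pre_ext X A" and B: "pre_ext X B" and x: "x \<in> topspace X"
  shows "\<exists>U V. openin A U \<and> openin B U \<and> openin A V \<and> openin B V \<and> None \<in> U \<and> Some x \<in> V \<and> U \<inter> V = {}"
proof -
  have cA: "None \<in> topspace A" "Some x \<in> topspace A" and cB: "None \<in> topspace B" "Some x \<in> topspace B"
    using A B x unfolding pre_ext_def pt_carrier_def by auto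
  obtain UA VA where a: "openin A UA" "openin A VA" "None \<in> UA" "Some x \<in> VA" "disjnt UA VA"
    using A cA unfolding pre_ext_def Hausdorff_space_def by (metis option.distinct(1))
  obtain UB VB where b: "openin B UB" "openin B VB" "None \<in> UB" "Some x \<in> VB" "disjnt UB VB"
    using B cB unfolding pre_ext_def Hausdorff_space_def by (metis option.distinct(1))
  have sA: "UA \<subseteq> pt_carrier X" "VA \<subseteq> pt_carrier X" using pre_sub[OF A] a by auto
  have sB: "UB \<subseteq> pt_carrier X" "VB \<subseteq> pt_carrier X" using pre_sub[OF B] b by auto
  have nVA: "None \<notin> VA" and nVB: "None \<notin> VB" using a b unfolding disjnt_def by auto
  have e1: "UA \<union> UB = UA \<union> Some ` (Some -` UB)" using sB a unfolding pt_carrier_def by auto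
  have e2: "UA \<union> UB = UB \<union> Some ` (Some -` UA)" using sA b unfolding pt_carrier_def by auto
  have e3: "VA \<inter> VB = VA \<inter> Some ` (Some -` VB)" using sB nVB unfolding pt_carrier_def by auto
  have e4: "VA \<inter> VB = VB \<inter> Some ` (Some -` VA)" using sA nVA unfolding pt_carrier_def by auto
  have "openin A (UA \<union> UB)" unfolding e1 using a pre_open_img[OF A pre_open_vimage[OF B b(1)]] by auto
  moreover have "openin B (UA \<union> UB)" unfolding e2 using b pre_open_img[OF B pre_open_vimage[OF A a(1)]] by auto
  moreover have "openin A (VA \<inter> VB)" unfolding e3 using a pre_open_img[OF A pre_open_vimage[OF B b(2)]] by auto
  moreover have "openin B (VA \<inter> VB)" unfolding e4 using b pre_open_img[OF B pre_open_vimage[OF A a(2)]] by auto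
  moreover have "(UA \<union> UB) \<inter> (VA \<inter> VB) = {}" using a b unfolding disjnt_def by auto
  ultimately show ?thesis using a b by blast
qed

lemma meet_Hausdorff:
  assumes H: "Hausdorff_space X" and A: "pre_ext X A" and B: "pre_ext X B"
  shows "Hausdorff_space (meet_sng A B)"
proof -
  have tA: "topspace A = pt_carrier X" using A unfolding pre_ext_def by simp
  have top: "topspace (meet_sng A B) = (\<lambda>p. {p}) ` pt_carrier X"
  proof -
    have tAB: "topspace A = topspace B" using A B unfolding pre_ext_def by simp
    have "openin B (topspace A)" unfolding tAB by (rule openin_topspace)
    then have "openin (meet_sng A B) ((\<lambda>p. {p}) ` topspace A)"
      using meet_open_img[OF openin_topspace[of A]] by blast
    then have "(\<lambda>p. {p}) ` topspace A \<subseteq> topspace (meet_sng A B)" by (simp add: openin_subset)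
    moreover have "topspace (meet_sng A B) \<subseteq> (\<lambda>p. {p}) ` topspace A"
      using openin_meet_sng[of A B "topspace (meet_sng A B)"] by simp
    ultimately show ?thesis unfolding tA by (rule subset_antisym[rotated])
  qed
  have sepN: "\<exists>U V. openin A U \<and> openin B U \<and> openin A V \<and> openin B V \<and> None \<in> U \<and> Some y \<in> V \<and> U \<inter> V = {}"
    if "y \<in> topspace X" for y using sep_None[OF A B that] .
  have sepS: "\<exists>U V. openin A U \<and> openin B U \<and> openin A V \<and> openin B V \<and> Some x \<in> U \<and> Some y \<in> V \<and> U \<inter> V = {}"
    if xy: "x \<in> topspace X" "y \<in> topspace X" "x \<noteq> y" for x y
  proof -
    obtain U V where UV: "openin X U" "openin X V" "x \<in> U" "y \<in> V" "disjnt U V"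
      using H xy unfolding Hausdorff_space_def by blast
    have "openin A (Some ` U)" "openin B (Some ` U)" "openin A (Some ` V)" "openin B (Some ` V)"
      using pre_open_img[OF A UV(1)] pre_open_img[OF A UV(2)] pre_open_img[OF B UV(1)] pre_open_img[OF B UV(2)] by auto
    moreover have "Some ` U \<inter> Some ` V = {}" using UV(5) unfolding disjnt_def by auto
    ultimately show ?thesis using UV(3,4) by blast
  qed
  have sep: "\<exists>U V. openin A U \<and> openin B U \<and> openin A V \<and> openin B V \<and> p \<in> U \<and> q \<in> V \<and> U \<inter> V = {}"
    if p: "p \<in> pt_carrier X" and q: "q \<in> pt_carrier X" and pq: "p \<noteq> q" for p q
  proof (cases p)
    case None
    then obtain y where y: "q = Some y" "y \<in> topspace X" using q pq unfolding pt_carrier_def by auto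
    show ?thesis using sepN[OF y(2)] None y(1) by simp
  next
    case (Some x)
    then have x: "p = Some x" "x \<in> topspace X" using p unfolding pt_carrier_def by auto
    show ?thesis
    proof (cases q)
      case None
      obtain U V where UV: "openin A U" "openin B U" "openin A V" "openin B V" "None \<in> U" "Some x \<in> V" "U \<inter> V = {}"
        using sepN[OF x(2)] by blast
      show ?thesis
        apply (rule exI[of _ V], rule exI[of _ U])
        using UV x(1) None by blast
    next
      case qy: (Some y)
      have "y \<in> topspace X" "x \<noteq> y" using q pq x qy unfolding pt_carrier_def by auto
      then show ?thesis using sepS[OF x(2)] x(1) qy by simp
    qed
  qed
  show ?thesis
    unfolding Hausdorff_space_def top
  proof (intro allI impI)
    fix a b assume ab: "a \<in> (\<lambda>p. {p}) ` pt_carrier X \<and> b \<in> (\<lambda>p. {p}) ` pt_carrier X \<and> a \<noteq> b"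
    then obtain p q where p: "p \<in> pt_carrier X" and q: "q \<in> pt_carrier X" and a: "a = {p}" and b: "b = {q}" by blast
    have "p \<noteq> q" using ab a b by auto
    then obtain U V where UV: "openin A U" "openin B U" "openin A V" "openin B V" "p \<in> U" "q \<in> V" "U \<inter> V = {}"
      using sep[OF p q] by blast
    have d: "disjnt ((\<lambda>p. {p}) ` U) ((\<lambda>p. {p}) ` V)" using UV(7) unfolding disjnt_def by auto
    show "\<exists>U V. openin (meet_sng A B) U \<and> openin (meet_sng A B) V \<and> a \<in> U \<and> b \<in> V \<and> disjnt U V"
      using meet_open_img[OF UV(1,2)] meet_open_img[OF UV(3,4)] UV(5,6) d a b by blast
  qed
qed

lemma Hausdorff_kification: "Hausdorff_space M \<Longrightarrow> Hausdorff_space (kification M)"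
  unfolding Hausdorff_space_def topspace_kification using openin_kification_finer by metis

lemma pushout_use:
  fixes Z :: "'p set topology" and P :: "'p topology"
  assumes PO: "cgh_pushout_square A0 B1 B2 P i1 i2 j1 j2" and Z: "CGH_space Z" "continuous_map B1 Z f" "continuous_map B2 Z g"
    "\<forall>x\<in>topspace A0. f (i1 x) = g (i2 x)"
  shows "\<exists>h. continuous_map P Z h \<and> (\<forall>y\<in>topspace B1. h (j1 y) = f y)"
proof -
  have U: "\<And>(Z :: 'p set topology) f g.
        CGH_space Z \<Longrightarrow> continuous_map B1 Z f \<Longrightarrow> continuous_map B2 Z g \<Longrightarrow>
        (\<forall>x\<in>topspace A0. f (i1 x) = g (i2 x)) \<Longrightarrow>
        (\<exists>h. continuous_map P Z h \<and> (\<forall>y\<in>topspace B1. h (j1 y) = f y))"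
    using PO unfolding cgh_pushout_square_def by blast
  show ?thesis using U[OF Z] .
qed

lemma pushout_open:
  assumes H: "Hausdorff_space X" and A: "pointed_ext X A" and B: "pointed_ext X B"
    and PO: "cgh_pushout_square (plus_ext X) A B (opc_ext X) id id id id"
    and UA: "openin A U" and UB: "openin B U"
  shows "openin (opc_ext X) U"
proof -
  have pA: "pre_ext X A" and pB: "pre_ext X B" using A B by (auto intro: pointed_pre)
  have tA: "topspace A = pt_carrier X" and tB: "topspace B = pt_carrier X" using pA pB unfolding pre_ext_def by auto
  define Z where "Z = kification (meet_sng A B)"
  have CZ: "CGH_space Z" unfolding Z_def CGH_space_def using Hausdorff_kification meet_Hausdorff[OF H pA pB] by auto
  have cM: "continuous_map C (meet_sng A B) (\<lambda>p. {p})" if C: "topspace C = pt_carrier X"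
    "\<And>W. openin A W \<Longrightarrow> openin B W \<Longrightarrow> openin C W" for C
    unfolding continuous_map
  proof (intro conjI allI impI)
    show "(\<lambda>p. {p}) ` topspace C \<subseteq> topspace (meet_sng A B)"
      using openin_subset[OF meet_open_img[of A "topspace A" B]] openin_topspace[of A] openin_topspace[of B] C(1) tA tB by auto
    fix V assume "openin (meet_sng A B) V"
    then have V: "V \<subseteq> (\<lambda>p. {p}) ` topspace A" "openin A ((\<lambda>p. {p}) -` V)" "openin B ((\<lambda>p. {p}) -` V)"
      unfolding openin_meet_sng by auto
    have "{x \<in> topspace C. {x} \<in> V} = (\<lambda>p. {p}) -` V" using V(1) C(1) tA by auto
    then show "openin C {x \<in> topspace C. {x} \<in> V}" using C(2) V by simp
  qed
  have kA: "k_space A" and kB: "k_space B" using A B unfolding pointed_ext_def CGH_space_def by auto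
  have fA: "continuous_map A Z (\<lambda>p. {p})" unfolding Z_def continuous_map_into_kification[OF kA]
  proof (rule cM)
    show "topspace A = pt_carrier X" by (rule tA)
  qed (auto)
  have fB: "continuous_map B Z (\<lambda>p. {p})" unfolding Z_def continuous_map_into_kification[OF kB]
  proof (rule cM)
    show "topspace B = pt_carrier X" by (rule tB)
  qed (auto)
  have ag: "\<forall>x\<in>topspace (plus_ext X). {id x} = {id x}" by simp
  obtain h where h: "continuous_map (opc_ext X) Z h" "\<forall>y\<in>topspace A. h (id y) = {y}"
    using pushout_use[OF PO CZ fA fB ag] by blast
  have U: "U \<subseteq> pt_carrier X" using pre_sub[OF pA UA] .
  have "openin (meet_sng A B) ((\<lambda>p. {p}) ` U)" using meet_open_img[OF UA UB] .
  then have "openin Z ((\<lambda>p. {p}) ` U)" unfolding Z_def by (rule openin_kification_finer)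
  then have "openin (opc_ext X) {x \<in> topspace (opc_ext X). h x \<in> (\<lambda>p. {p}) ` U}"
    using openin_continuous_map_preimage[OF h(1)] by blast
  moreover have "{x \<in> topspace (opc_ext X). h x \<in> (\<lambda>p. {p}) ` U} = U"
    using h(2) U unfolding topspace_opc tA by auto
  ultimately show ?thesis by simp
qed



lemma key:
  assumes lc: "locally_compact_space X" and H: "Hausdorff_space X"
    and A: "pointed_ext X A" and B: "pointed_ext X B"
    and Cnd: "\<forall>D. closedin X D \<and> kc X A D \<and> kc X B D \<longrightarrow> compactin X D"
    and Push: "\<And>U. openin A U \<Longrightarrow> openin B U \<Longrightarrow> openin (opc_ext X) U"
  shows "negtop X A = negtop X (negtop X B)"
proof -
  have pA: "pre_ext X A" and pB: "pre_ext X B" using A B by (auto intro: pointed_pre)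
  have eq: "kc X A E \<longleftrightarrow> kc X (negtop X B) E" if E: "closedin X E" for E
  proof
    assume kA: "kc X A E"
    show "kc X (negtop X B) E" unfolding kc_def
    proof clarify
      fix U0 assume U0: "openin (negtop X B) U0" "None \<in> U0"
      define F where "F = topspace X - Some -` U0"
      have kF: "kc X B F" using U0 unfolding openin_negtop F_def by blast
      have cF: "closedin X F" using U0 unfolding openin_negtop F_def by blast
      have "kc X A (E \<inter> F)" using kc_closed_sub[OF kA cF] .
      moreover have "kc X B (E \<inter> F)" using kc_closed_sub[OF kF E] by (simp add: inf_commute)
      moreover have "closedin X (E \<inter> F)" using E cF by blast
      ultimately have "compactin X (E \<inter> F)" using Cnd by blast
      moreover have "E \<inter> F = E - Some -` U0" unfolding F_def using closedin_subset[OF E] by blast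
      ultimately show "compactin X (E - Some -` U0)" by simp
    qed
  next
    assume kN: "kc X (negtop X B) E"
    have EX: "E \<subseteq> topspace X" using closedin_subset[OF E] .
    have DE: "compactin X (D \<inter> E)" if D: "closedin X D" "kc X B D" for D
    proof -
      have DX: "D \<subseteq> topspace X" using closedin_subset[OF D(1)] .
      define U1 where "U1 = pt_carrier X - Some ` D"
      have e: "Some -` U1 = topspace X - D" unfolding U1_def pt_carrier_def by auto
      have e2: "topspace X - Some -` U1 = D" unfolding e using DX by blast
      have "openin (negtop X B) U1" unfolding openin_negtop e2 unfolding e using D
        unfolding U1_def by (auto simp: pt_carrier_def)
      moreover have "None \<in> U1" unfolding U1_def pt_carrier_def by auto
      ultimately have "compactin X (E - Some -` U1)" using kN unfolding kc_def by blast
      moreover have "E - Some -` U1 = D \<inter> E" unfolding e using EX by blast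
      ultimately show ?thesis by simp
    qed
    show "kc X A E" unfolding kc_def
    proof clarify
      fix U0 assume U0: "openin A U0" "None \<in> U0"
      have oU0: "openin X (Some -` U0)" using pre_open_vimage[OF pA U0(1)] .
      have oXE: "openin X (topspace X - E)" using E by blast
      define U' where "U' = U0 \<union> Some ` (topspace X - E)"
      have U'C: "U' \<subseteq> pt_carrier X" unfolding U'_def using pre_sub[OF pA U0(1)] unfolding pt_carrier_def by auto
      have vU': "Some -` U' = Some -` U0 \<union> (topspace X - E)" unfolding U'_def by auto
      have oA: "openin A U'" unfolding U'_def using U0(1) pre_open_img[OF pA oXE] by blast
      have oB: "openin B U'"
        unfolding pointed_open_char[OF B]
      proof (intro conjI U'C impI allI)
        show "openin X (Some -` U')" unfolding vU' using oU0 oXE by blast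
        fix D assume D': "closedin X D \<and> kc X B D"
        then have D: "closedin X D" "kc X B D" by auto
        have "compactin X (D \<inter> E)" using DE[OF D] .
        moreover have "closedin X (topspace X - Some -` U0)" using oU0 by blast
        ultimately have "compactin X (D \<inter> E \<inter> (topspace X - Some -` U0))" using compact_Int_closedin by blast
        moreover have "D \<inter> E \<inter> (topspace X - Some -` U0) = D - Some -` U'"
          unfolding vU' using EX closedin_subset[OF D(1)] by blast
        ultimately show "compactin X (D - Some -` U')" by simp
      qed
      have "openin (opc_ext X) U'" using Push[OF oA oB] .
      moreover have "None \<in> U'" unfolding U'_def using U0 by blast
      ultimately have "compactin X (topspace X - Some -` U')" unfolding openin_opc by blast
      moreover have "topspace X - Some -` U' = E - Some -` U0" unfolding vU' using EX by blast
      ultimately show "compactin X (E - Some -` U0)" by simp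
    qed
  qed
  show ?thesis
    unfolding topology_eq
  proof
    fix U
    show "openin (negtop X A) U \<longleftrightarrow> openin (negtop X (negtop X B)) U"
    proof (cases "U \<subseteq> pt_carrier X \<and> openin X (Some -` U)")
      case True
      then have "closedin X (topspace X - Some -` U)" by blast
      then show ?thesis unfolding openin_negtop using eq True by blast
    next
      case False
      then show ?thesis unfolding openin_negtop by blast
    qed
  qed
qed

theorem mainTheorem11:
  fixes X :: "'a topology" and T' T'' :: "'a option topology"
  assumes "locally_compact_space X" and "Hausdorff_space X"
    and "pointed_ext X T'" and "pointed_ext X T''"
    and "cgh_pullback_square (plus_ext X) T'' T' (opc_ext X) id id id id"
    and "cgh_pushout_square (plus_ext X) T'' T' (opc_ext X) id id id id"
  shows "neg_ext X T'' = neg_ext X (neg_ext X T') \<and> neg_ext X T' = neg_ext X (neg_ext X T'')"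
proof -
  note lc = assms(1) and H = assms(2)
  have p1: "pre_ext X T'" and p2: "pre_ext X T''" using assms(3,4) by (auto intro: pointed_pre)
  have kX: "k_space X" using locally_compact_imp_k_space[OF lc] .
  have hom: "homeomorphic_map (plus_ext X) (ext_fibprod T'' T') (\<lambda>p. (p,p))"
    using assms(5) unfolding cgh_pullback_square_def ext_fibprod_def by simp
  have C21: "\<forall>D. closedin X D \<and> kc X T'' D \<and> kc X T' D \<longrightarrow> compactin X D"
    using fib_char[OF kX p2 p1] hom by blast
  have C12: "\<forall>D. closedin X D \<and> kc X T' D \<and> kc X T'' D \<longrightarrow> compactin X D"
    using C21 by blast
  have P21: "openin (opc_ext X) U" if "openin T'' U" "openin T' U" for U
    using pushout_open[OF H assms(4) assms(3) assms(6) that] .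
  have P12: "openin (opc_ext X) U" if "openin T' U" "openin T'' U" for U
    using P21 that by blast
  have e1: "negtop X T'' = negtop X (negtop X T')" using key[OF lc H assms(4) assms(3) C21 P21] .
  have e2: "negtop X T' = negtop X (negtop X T'')" using key[OF lc H assms(3) assms(4) C12 P12] .
  have n1: "neg_ext X T' = negtop X T'" using neg_eq[OF lc H p1] .
  have n2: "neg_ext X T'' = negtop X T''" using neg_eq[OF lc H p2] .
  have n11: "neg_ext X (negtop X T') = negtop X (negtop X T')"
    using neg_eq[OF lc H negtop_pre[OF lc H p1]] .
  have n22: "neg_ext X (negtop X T'') = negtop X (negtop X T'')"
    using neg_eq[OF lc H negtop_pre[OF lc H p2]] .
  show ?thesis unfolding n1 n2 n11 n22 using e1 e2 by simp
qed


end
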